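(* Let $a,b\in\mathbb C$, let $p,k\ge0$ be integers and let $c_j,d_j,e_j\in\mathbb C$ for $j=0,\dots,p-1$. Then the coefficient of $x^p$ in $\widetilde{\mathcal T}_k^{a,b}\left[\left(\prod_{j=0}^{p-1}(c_jx-d_ji+e_j)\right)_i\right]$ equals $$\sum_{j=0}^{k}\frac{k!}{(k-j)!}\left(\sum_{\substack{S\sqcup T=\{0,\dots,p-1\}\\ |S|=j}}\prod_{s\in S}d_s\prod_{t\in T}c_t\right)\prod_{r=0}^{k-j-1}(a-b+j+r),$$ where the inner sum is over all ordered pairs $(S,T)$ of disjoint subsets with union $\{0,\dots,p-1\}$ and $|S|=j$ (it is empty, hence $0$, when $j>p$).
   Context: For integers $0\le i\le k$, $P_i^k(x;a,b):=\prod_{j=0}^{k-i-1}(x+j+a)\prod_{j=0}^{i-1}(x-j+b)$. For a sequence of polynomials $(a_i(x))_{i\ge0}$, $\widetilde{\mathcal T}_k^{a,b}[(a_i(x))_i]:=(-1)^k\sum_{i=0}^k(-1)^{k-i}\binom{k}{i}P_i^k(x;a,b)\,a_i(x)$. *)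

theory Defs
  imports Complex_Main "HOL-Computational_Algebra.Polynomial"
begin

definition Ppoly :: "nat \<Rightarrow> nat \<Rightarrow> complex \<Rightarrow> complex \<Rightarrow> complex poly" where
  "Ppoly i k a b = (\<Prod>j<k - i. [:of_nat j + a, 1:]) * (\<Prod>j<i. [:b - of_nat j, 1:])"

definition Ttilde :: "nat \<Rightarrow> complex \<Rightarrow> complex \<Rightarrow> (nat \<Rightarrow> complex poly) \<Rightarrow> complex poly" where
  "Ttilde k a b A = (-1) ^ k * (\<Sum>i\<in>{0..k}. (-1) ^ (k - i) * of_nat (k choose i) * Ppoly i k a b * A i)"

end

theory Submission
  imports Defs
begin

definition Dn :: "complex \<Rightarrow> nat \<Rightarrow> complex poly" where
  "Dn b n = (\<Prod>j<n. [:b - of_nat j, 1:])"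

lemma Dn_Suc: "Dn b (Suc n) = Dn b n * [:b - of_nat n, 1:]"
  by (simp add: Dn_def)

lemma Dn_split: "Dn b (l + i) = Dn b l * Dn (b - of_nat l) i"
  by (induction i) (auto simp: Dn_Suc Dn_def algebra_simps)

lemma Dn_poch: "Dn b i = (-1)^i * pochhammer (-[:b,1:]) i"
proof (induction i)
  case 0 then show ?case by (simp add: Dn_def)
next
  case (Suc i)
  have e: "[:b - of_nat i, 1:] = - (-[:b,1:] + of_nat i)" by (simp add: of_nat_poly)
  have "Dn b (Suc i) = (-1)^i * pochhammer (-[:b,1:]) i * (- (-[:b,1:] + of_nat i))"
    by (simp only: Dn_Suc Suc e)
  also have "\<dots> = (-1)^Suc i * pochhammer (-[:b,1:]) (Suc i)"
    by (simp only: pochhammer_Suc power_Suc) (simp add: algebra_simps)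
  finally show ?case .
qed

lemma poch_const: "pochhammer [:c:] n = [:pochhammer c n:]"
  by (induction n) (simp_all add: pochhammer_Suc of_nat_poly mult.commute)

lemma Ppoly_eq: "Ppoly i k a b = pochhammer [:a,1:] (k-i) * Dn b i"
proof -
  have "(\<Prod>j<k - i. [:of_nat j + a, 1:]) = pochhammer [:a,1:] (k-i)"
    unfolding pochhammer_prod atLeast0LessThan
    by (rule prod.cong) (auto simp: of_nat_poly)
  then show ?thesis by (simp add: Ppoly_def Dn_def)
qed

lemma sign_combine: "i \<le> K \<Longrightarrow> (-1::complex poly)^(K-i) * (-1)^i = (-1)^K"
  by (metis le_add_diff_inverse2 power_add)

lemma G_eq:
  "Ttilde k a b (\<lambda>i. of_nat (i choose l)) =
     smult ((-1)^l * of_nat (k choose l) * pochhammer (a - b + of_nat l) (k - l)) (Dn b l)"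
proof (cases "l \<le> k")
  case False
  have "(\<Sum>i\<in>{0..k}. (-1) ^ (k - i) * of_nat (k choose i) * Ppoly i k a b *
      (of_nat (i choose l) :: complex poly)) = 0"
    using False by (intro sum.neutral) auto
  then show ?thesis using False by (simp add: Ttilde_def)
next
  case True
  define K where "K = k - l"
  have k: "k = l + K" using True K_def by simp
  define u where "u = [:a,1::complex:]"
  define v where "v = - [:b - of_nat l, 1::complex:]"
  let ?f = "\<lambda>i. (-1) ^ (k - i) * of_nat (k choose i) * Ppoly i k a b * (of_nat (i choose l) :: complex poly)"
  have z: "\<forall>i\<in>{0..k} - {l..k}. ?f i = 0"
  proof
    fix i assume "i \<in> {0..k} - {l..k}"
    then have "i < l" by auto
    then show "?f i = 0" by simp
  qed
  have "(\<Sum>i\<in>{0..k}. ?f i) = (\<Sum>i\<in>{l..k}. ?f i)"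
    using z by (intro sum.mono_neutral_right) auto
  also have "\<dots> = (\<Sum>i\<in>{0+l..K+l}. ?f i)"
    by (rule arg_cong[where f="sum ?f"]) (use True in \<open>simp add: K_def\<close>)
  also have "\<dots> = (\<Sum>i\<in>{0..K}. ?f (i + l))" by (rule sum.shift_bounds_cl_nat_ivl)
  also have "\<dots> = (\<Sum>i\<in>{0..K}. ((-1)^K * of_nat (k choose l) * Dn b l) *
        (of_nat (K choose i) * pochhammer v i * pochhammer u (K - i)))"
  proof (rule sum.cong[OF refl])
    fix i assume i: "i \<in> {0..K}"
    then have iK: "i \<le> K" by simp
    have c: "(k choose (i + l)) * ((i + l) choose l) = (k choose l) * (K choose i)"
      using choose_mult[of l "i+l" k] iK True by (simp add: K_def)
    have p: "Ppoly (i + l) k a b = pochhammer u (K - i) * (Dn b l * ((-1)^i * pochhammer v i))"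
    proof -
      have "k - (i + l) = K - i" using k by simp
      moreover have "Dn b (i + l) = Dn b l * ((-1)^i * pochhammer v i)"
        using Dn_split[of b l i] Dn_poch[of "b - of_nat l" i] by (simp add: add.commute v_def)
      ultimately show ?thesis unfolding Ppoly_eq u_def by simp
    qed
    have s: "(-1::complex poly)^(k - (i + l)) = (-1)^(K-i)" using k by simp
    have "?f (i + l) = ((-1)^(K-i) * (-1)^i) * of_nat ((k choose (i + l)) * ((i + l) choose l)) *
         pochhammer u (K - i) * Dn b l * pochhammer v i"
      unfolding p s of_nat_mult by (simp add: algebra_simps)
    also have "\<dots> = ((-1)^K * of_nat (k choose l) * Dn b l) *
        (of_nat (K choose i) * pochhammer v i * pochhammer u (K - i))"
      unfolding c sign_combine[OF iK] of_nat_mult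
      by (simp add: algebra_simps)
    finally show "?f (i + l) = \<dots>" .
  qed
  also have "\<dots> = ((-1)^K * of_nat (k choose l) * Dn b l) * pochhammer (v + u) K"
    by (simp add: pochhammer_binomial_sum sum_distrib_left atMost_atLeast0)
  also have "v + u = [:a - b + of_nat l:]" by (simp add: u_def v_def)
  finally have S: "(\<Sum>i\<in>{0..k}. ?f i) = ((-1)^K * of_nat (k choose l) * Dn b l) *
      [:pochhammer (a - b + of_nat l) K:]" by (simp add: poch_const)
  have "(-1::complex poly)^k * (-1)^K = (-1)^l"
    using k by (simp add: power_add power_mult_distrib flip: power_mult)  
  then have e: "(-1::complex poly)^k * (-1)^K = [:(-1)^l:]" by (simp add: poly_const_pow flip: pCons_one)
  have "Ttilde k a b (\<lambda>i. of_nat (i choose l)) =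
     ((-1)^k * (-1)^K) * (of_nat (k choose l) * [:pochhammer (a - b + of_nat l) K:]) * Dn b l"
    unfolding Ttilde_def S by (simp add: mult_ac)
  also have "\<dots> = [:(-1)^l * of_nat (k choose l) * pochhammer (a - b + of_nat l) K:] * Dn b l"
    unfolding e by (simp add: of_nat_poly mult_ac)
  finally show ?thesis by (simp add: K_def)
qed


lemma Ttilde_sum: "finite F \<Longrightarrow> Ttilde k a b (\<lambda>i. \<Sum>s\<in>F. f s i) = (\<Sum>s\<in>F. Ttilde k a b (f s))"
  unfolding Ttilde_def
  by (simp add: sum_distrib_left sum_distrib_right flip: sum.swap[of _ F])

lemma Ttilde_mult: "Ttilde k a b (\<lambda>i. q * f i) = q * Ttilde k a b f"
  unfolding Ttilde_def by (simp add: sum_distrib_left mult_ac)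

fun w :: "nat \<Rightarrow> nat \<Rightarrow> complex" where
  "w 0 l = (if l = 0 then 1 else 0)"
| "w (Suc m) l = of_nat l * w m l + (if l = 0 then 0 else of_nat l * w m (l - 1))"

lemma w_zero: "m < l \<Longrightarrow> w m l = 0"
  by (induction m arbitrary: l) auto

lemma w_diag: "w m m = fact m"
  by (induction m) (auto simp: w_zero)

lemma times_choose: "i * (i choose l) = l * (i choose l) + Suc l * (i choose Suc l)"
proof (cases "l \<le> i")
  case True
  have "Suc l * (i choose Suc l) = (i - l) * (i choose l)"
    by (metis binomial_absorption binomial_absorb_comp)
  then show ?thesis using True by (simp add: add_mult_distrib[symmetric])
next
  case False then show ?thesis by (simp add: binomial_eq_0)
qed

lemma pow_expand: "(of_nat i :: complex) ^ m = (\<Sum>l\<le>m. w m l * of_nat (i choose l))"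
proof (induction m)
  case 0 then show ?case by simp
next
  case (Suc m)
  have "(of_nat i :: complex) ^ Suc m = (\<Sum>l\<le>m. w m l * (of_nat i * of_nat (i choose l)))"
    by (simp add: Suc sum_distrib_left mult_ac)
  also have "\<dots> = (\<Sum>l\<le>m. of_nat l * w m l * of_nat (i choose l)) +
      (\<Sum>l\<le>m. of_nat (Suc l) * w m l * of_nat (i choose Suc l))"
  proof -
    have "of_nat i * of_nat (i choose l) = (of_nat l * of_nat (i choose l) +
        of_nat (Suc l) * of_nat (i choose Suc l) :: complex)" for l
      using arg_cong[OF times_choose[of i l], of "of_nat :: nat \<Rightarrow> complex"]
      by (simp only: of_nat_mult of_nat_add)
    then show ?thesis by (simp add: sum.distrib algebra_simps)
  qed
  also have "\<dots> = (\<Sum>l\<le>Suc m. w (Suc m) l * of_nat (i choose l))"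
  proof -
    have A: "(\<Sum>l\<le>Suc m. of_nat l * w m l * of_nat (i choose l)) =
         (\<Sum>l\<le>m. of_nat l * w m l * of_nat (i choose l) :: complex)"
      by (simp add: w_zero)
    have B: "(\<Sum>l\<le>Suc m. (if l = 0 then 0 else of_nat l * w m (l - 1)) * of_nat (i choose l)) =
         (\<Sum>l\<le>m. of_nat (Suc l) * w m l * of_nat (i choose Suc l) :: complex)"
      by (subst sum.atMost_Suc_shift) simp
    show ?thesis
      by (simp only: w.simps distrib_right sum.distrib A B)
  qed
  finally show ?case .
qed

lemma Dn_monic: "degree (Dn b l) = l \<and> coeff (Dn b l) l = 1"
proof (induction l)
  case 0 then show ?case by (simp add: Dn_def)
next
  case (Suc l)
  then have nz: "Dn b l \<noteq> 0" by auto
  have "degree (Dn b (Suc l)) = Suc l" unfolding Dn_Suc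
    by (subst degree_mult_eq) (use nz Suc in auto)
  moreover have "coeff (Dn b (Suc l)) (Suc l) = 1"
    using Suc nz lead_coeff_mult[of "Dn b l" "[:b - of_nat l, 1:]"]
    unfolding Dn_Suc by (subst (asm) degree_mult_eq) (use nz in auto)
  ultimately show ?case by simp
qed

definition Hc :: "nat \<Rightarrow> complex \<Rightarrow> complex \<Rightarrow> nat \<Rightarrow> complex" where
  "Hc k a b l = (-1)^l * of_nat (k choose l) * pochhammer (a - b + of_nat l) (k - l)"

lemma H_prop:
  shows "degree (Ttilde k a b (\<lambda>i. (of_nat i :: complex poly) ^ m)) \<le> m \<and>
    coeff (Ttilde k a b (\<lambda>i. (of_nat i :: complex poly) ^ m)) m = fact m * Hc k a b m"
proof -
  have e: "(of_nat i :: complex poly) ^ m = (\<Sum>l\<le>m. [:w m l:] * of_nat (i choose l))" for i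
  proof -
    have "(of_nat i :: complex poly) ^ m = [:(of_nat i :: complex) ^ m:]"
      by (simp add: of_nat_poly poly_const_pow)
    also have "\<dots> = (\<Sum>l\<le>m. [:w m l:] * of_nat (i choose l))"
      unfolding pow_expand by (simp add: of_nat_poly mult.commute flip: sum_to_poly)
    finally show ?thesis .
  qed
  have T: "Ttilde k a b (\<lambda>i. (of_nat i :: complex poly) ^ m) =
      (\<Sum>l\<le>m. smult (w m l * Hc k a b l) (Dn b l))"
    unfolding e by (simp only: Ttilde_sum[OF finite_atMost] Ttilde_mult G_eq) (simp add: Hc_def mult.commute)
  have "degree (\<Sum>l\<le>m. smult (w m l * Hc k a b l) (Dn b l)) \<le> m"
    by (rule degree_sum_le) (auto intro: order.trans[OF degree_smult_le] simp: Dn_monic)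
  moreover have "coeff (\<Sum>l\<le>m. smult (w m l * Hc k a b l) (Dn b l)) m = fact m * Hc k a b m"
  proof -
    have "coeff (\<Sum>l\<le>m. smult (w m l * Hc k a b l) (Dn b l)) m =
        (\<Sum>l<Suc m. w m l * Hc k a b l * coeff (Dn b l) m)"
      by (simp add: coeff_sum lessThan_Suc_atMost)
    also have "\<dots> = w m m * Hc k a b m"
      using Dn_monic by (simp add: coeff_eq_0)
    finally show ?thesis by (simp add: w_diag)
  qed
  ultimately show ?thesis unfolding T by simp
qed


lemma coeff_mult_top:
  fixes q h :: "complex poly"
  assumes "degree q \<le> u" "degree h \<le> v"
  shows "coeff (q * h) (u + v) = coeff q u * coeff h v"
proof (cases "degree q = u \<and> degree h = v")
  case True then show ?thesis using coeff_mult_degree_sum[of q h] by simp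
next
  case False
  then have "degree (q * h) < u + v" using assms degree_mult_le[of q h] by linarith
  moreover have "coeff q u = 0 \<or> coeff h v = 0" using False assms by (auto intro: coeff_eq_0)
  ultimately show ?thesis by (auto intro: coeff_eq_0)
qed

lemma linprod:
  fixes e c :: "nat \<Rightarrow> complex"
  assumes "finite T"
  shows "degree (\<Prod>t\<in>T. [:e t, c t:]) \<le> card T \<and> coeff (\<Prod>t\<in>T. [:e t, c t:]) (card T) = (\<Prod>t\<in>T. c t)"
  using assms
proof (induction T rule: finite_induct)
  case empty then show ?case by simp
next
  case (insert x T)
  let ?q = "\<Prod>t\<in>T. [:e t, c t:]"
  have d1: "degree [:e x, c x:] \<le> 1" by (simp add: degree_pCons_le)
  have "degree (?q * [:e x, c x:]) \<le> card T + 1"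
    using insert degree_mult_le[of ?q "[:e x, c x:]"] d1 by linarith
  moreover have "coeff (?q * [:e x, c x:]) (card T + 1) = (\<Prod>t\<in>T. c t) * c x"
    using coeff_mult_top[of ?q "card T" "[:e x, c x:]" 1] insert d1 by simp
  ultimately show ?case using insert by (simp add: mult.commute)
qed

theorem corollary3:
  fixes a b :: complex and p k :: nat and c d e :: "nat \<Rightarrow> complex"
  shows "coeff (Ttilde k a b (\<lambda>i. \<Prod>j<p. [:e j - d j * of_nat i, c j:])) p =
    (\<Sum>j\<in>{0..k}. (fact k / fact (k - j)) *
       (\<Sum>S\<in>{S. S \<subseteq> {0..<p} \<and> card S = j}. (\<Prod>s\<in>S. d s) * (\<Prod>t\<in>{0..<p} - S. c t)) *
       (\<Prod>r<k - j. a - b + of_nat j + of_nat r))"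
proof -
  define P where "P = Pow {..<p}"
  define Q where "Q S = [:\<Prod>s\<in>S. - d s:] * (\<Prod>t\<in>{..<p} - S. [:e t, c t:])" for S
  define H where "H m = Ttilde k a b (\<lambda>i. (of_nat i :: complex poly) ^ m)" for m
  have A: "(\<Prod>j<p. [:e j - d j * of_nat i, c j:]) = (\<Sum>S\<in>P. Q S * (of_nat i) ^ card S)" for i
  proof -
    have "(\<Prod>j<p. [:e j - d j * of_nat i, c j:]) = (\<Prod>j<p. [:- d j:] * of_nat i + [:e j, c j:])"
      by (rule prod.cong) (auto simp: of_nat_poly)
    also have "\<dots> = (\<Sum>S\<in>P. (\<Prod>s\<in>S. [:- d s:] * of_nat i) * (\<Prod>t\<in>{..<p} - S. [:e t, c t:]))"
      unfolding P_def by (rule prod_add) simp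
    also have "\<dots> = (\<Sum>S\<in>P. Q S * (of_nat i) ^ card S)"
    proof (rule sum.cong[OF refl])
      fix S
      have "(\<Prod>s\<in>S. [:- d s:] * (of_nat i :: complex poly)) = [:\<Prod>s\<in>S. - d s:] * of_nat i ^ card S"
        by (simp only: prod.distrib prod_constant prod_to_poly)
      then show "(\<Prod>s\<in>S. [:- d s:] * of_nat i) * (\<Prod>t\<in>{..<p} - S. [:e t, c t:]) = Q S * (of_nat i) ^ card S"
        unfolding Q_def by (simp only: mult_ac)
    qed
    finally show ?thesis .
  qed
  have T: "Ttilde k a b (\<lambda>i. \<Prod>j<p. [:e j - d j * of_nat i, c j:]) = (\<Sum>S\<in>P. Q S * H (card S))"
    unfolding A H_def by (simp add: Ttilde_sum P_def Ttilde_mult)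
  define G where "G j S = (fact k / fact (k - j)) * ((\<Prod>s\<in>S. d s) * (\<Prod>t\<in>{0..<p} - S. c t)) *
       (\<Prod>r<k - j. a - b + of_nat j + of_nat r)" for j S
  have C: "coeff (Q S * H (card S)) p = (\<Sum>j\<in>{0..k}. if card S = j then G j S else 0)" if S: "S \<in> P" for S
  proof -
    have fin: "finite S" using S by (auto simp: P_def intro: finite_subset)
    have cS: "card S \<le> p" using S card_mono[of "{..<p}" S] by (auto simp: P_def)
    have cT: "card ({..<p} - S) = p - card S" using S fin by (simp add: P_def card_Diff_subset)
    have LQ: "degree (Q S) \<le> p - card S \<and> coeff (Q S) (p - card S) = (\<Prod>s\<in>S. - d s) * (\<Prod>t\<in>{..<p} - S. c t)"
      using linprod[of "{..<p} - S" e c] cT unfolding Q_def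
      by (auto intro: order.trans[OF degree_smult_le])
    have HH: "degree (H (card S)) \<le> card S \<and> coeff (H (card S)) (card S) = fact (card S) * Hc k a b (card S)"
      unfolding H_def by (rule H_prop)
    have "coeff (Q S * H (card S)) p = coeff (Q S * H (card S)) ((p - card S) + card S)" using cS by simp
    also have "\<dots> = (\<Prod>s\<in>S. - d s) * (\<Prod>t\<in>{..<p} - S. c t) * (fact (card S) * Hc k a b (card S))"
      using coeff_mult_top[of "Q S" "p - card S" "H (card S)" "card S"] LQ HH by simp
    also have "\<dots> = (if card S \<le> k then G (card S) S else 0)"
    proof (cases "card S \<le> k")
      case True
      have pr: "(\<Prod>r<k - card S. a - b + of_nat (card S) + of_nat r) = pochhammer (a - b + of_nat (card S)) (k - card S)"
        by (simp add: pochhammer_prod atLeast0LessThan)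
      have sg: "(-1::complex) ^ card S * (-1) ^ card S = 1"
        by (simp flip: power_add add.commute)
      have bf: "fact (card S) * (of_nat (k choose card S) :: complex) = fact k / fact (k - card S)"
        using True by (simp add: binomial_fact)
      have "(\<Prod>s\<in>S. - d s) * (\<Prod>t\<in>{..<p} - S. c t) * (fact (card S) * Hc k a b (card S))
         = ((-1) ^ card S * (-1) ^ card S) * (fact (card S) * of_nat (k choose card S)) *
           ((\<Prod>s\<in>S. d s) * (\<Prod>t\<in>{..<p} - S. c t)) * pochhammer (a - b + of_nat (card S)) (k - card S)"
        by (simp add: prod_uminus Hc_def mult_ac)
      also have "\<dots> = G (card S) S"
        unfolding sg bf G_def pr by (simp add: atLeast0LessThan)
      finally show ?thesis using True by simp
    next
      case False
      then show ?thesis by (simp add: Hc_def)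
    qed
    also have "\<dots> = (\<Sum>j\<in>{0..k}. if card S = j then G j S else 0)" by simp
    finally show ?thesis .
  qed
  have "coeff (Ttilde k a b (\<lambda>i. \<Prod>j<p. [:e j - d j * of_nat i, c j:])) p =
      (\<Sum>S\<in>P. \<Sum>j\<in>{0..k}. if card S = j then G j S else 0)"
    unfolding T coeff_sum using C by simp
  also have "\<dots> = (\<Sum>j\<in>{0..k}. \<Sum>S\<in>{S \<in> P. card S = j}. G j S)"
    by (subst sum.swap) (simp add: sum.inter_filter[symmetric] P_def)
  also have "\<dots> = (\<Sum>j\<in>{0..k}. (fact k / fact (k - j)) *
       (\<Sum>S\<in>{S. S \<subseteq> {0..<p} \<and> card S = j}. (\<Prod>s\<in>S. d s) * (\<Prod>t\<in>{0..<p} - S. c t)) *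
       (\<Prod>r<k - j. a - b + of_nat j + of_nat r))"
  proof (rule sum.cong[OF refl])
    fix j
    have "{S \<in> P. card S = j} = {S. S \<subseteq> {0..<p} \<and> card S = j}"
      by (auto simp: P_def atLeast0LessThan)
    then show "(\<Sum>S\<in>{S \<in> P. card S = j}. G j S) = (fact k / fact (k - j)) *
       (\<Sum>S\<in>{S. S \<subseteq> {0..<p} \<and> card S = j}. (\<Prod>s\<in>S. d s) * (\<Prod>t\<in>{0..<p} - S. c t)) *
       (\<Prod>r<k - j. a - b + of_nat j + of_nat r)"
      by (simp add: G_def sum_distrib_left sum_distrib_right mult_ac)
  qed
  finally show ?thesis .
qed

end
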